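(* Let $n\ge 3$ be a prime power and let $x,y,z$ be the coordinate functions of the GK curve over $\mathbb{F}_{n^6}$. For $1\le k\le n^2-1$ define sets of rational functions $T_k$ as follows. For $1\le k\le n-1$: $T_k=\{y^iz^j/x^k : 0\le i\le k,\ k-i+1\le j\le n^2-n\}\cup\{y^iz^j/x^k : k+1\le i\le n,\ 0\le j\le n^2-n\}$. For $n\le k\le n^2-n-2$: $T_k=\{y^iz^j/x^k : 0\le i\le n,\ k-i+1\le j\le n^2-n\}$. For $n^2-n-1\le k\le n^2-1$: $T_k=\{y^iz^j/x^k : k-n^2+n+1\le i\le n,\ k-i+1\le j\le n^2-n\}$. Let $T=\bigcup_{k=1}^{n^2-1}T_k$. Then the functions listed are pairwise distinct and $|T|=g=\tfrac12(n^5-2n^3+n^2)$, the genus of the GK curve.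
   Context: Let $n\ge 2$ be a prime power and $q=n^3$. The GK curve is the (absolutely irreducible, nonsingular) curve in $\mathbb{P}^3$ over $\mathbb{F}_{q^2}$ with affine equations $Z^{n^2-n+1}=Y\,h(X)$, $X^n+X=Y^{n+1}$, where $h(X)=\sum_{i=0}^{n}(-1)^{i+1}X^{i(n-1)}$. Its function field is $\mathbb{F}_{q^2}(x,y,z)$ with $z^{n^2-n+1}=y h(x)$ and $x^n+x=y^{n+1}$. It has a unique point at infinity $P_\infty=(1:0:0:0)$, and $P_0$ denotes the affine point $(0,0,0)$. Its genus is $g=\tfrac12(n^3+1)(n^2-2)+1=\tfrac12(n^5-2n^3+n^2)$. *)

theory Defs
  imports "HOL-Computational_Algebra.Polynomial"
begin

text \<open>Polynomials in X, Y, Z over a field are represented as nested univariate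
polynomials  'a poly poly poly : Z is the outermost variable, Y the middle one,
X the innermost one.\<close>

definition gkX :: "'a::comm_ring_1 poly poly poly" where
  "gkX = [: [: [:0, 1:] :] :]"

definition gkY :: "'a::comm_ring_1 poly poly poly" where
  "gkY = [: [:0, 1:] :]"

definition gkZ :: "'a::comm_ring_1 poly poly poly" where
  "gkZ = [:0, 1:]"

definition gk_h :: "nat \<Rightarrow> 'a::comm_ring_1 poly poly poly" where
  "gk_h n = (\<Sum>i\<le>n. (-1) ^ (i + 1) * gkX ^ (i * (n - 1)))"

definition gk_ideal :: "nat \<Rightarrow> 'a::comm_ring_1 poly poly poly \<Rightarrow> bool" where
  "gk_ideal n f \<longleftrightarrow> (\<exists>A B.
     f = A * (gkY ^ (n + 1) - gkX ^ n - gkX) + B * (gkZ ^ (n^2 - n + 1) - gkY * gk_h n))"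

text \<open>The rational functions y^i z^j / x^k and y^i' z^j' / x^k' coincide in the
  function field (fraction field of the coordinate ring F[X,Y,Z]/I) iff
  X^k' Y^i Z^j - X^k Y^i' Z^j' lies in I.\<close>
definition gk_fun_eq :: "nat \<Rightarrow> 'a::comm_ring_1 itself \<Rightarrow> nat \<times> nat \<times> nat \<Rightarrow> nat \<times> nat \<times> nat \<Rightarrow> bool" where
  "gk_fun_eq n _ a b = (case a of (i, j, k) \<Rightarrow> case b of (i', j', k') \<Rightarrow>
     gk_ideal n ((gkX ^ k' * gkY ^ i * gkZ ^ j - gkX ^ k * gkY ^ i' * gkZ ^ j')
        :: 'a poly poly poly))"

definition T_idx :: "nat \<Rightarrow> nat \<Rightarrow> (nat \<times> nat \<times> nat) set" where
  "T_idx n k =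
    (if 1 \<le> k \<and> k \<le> n - 1 then
       {(i, j, k) | i j. i \<le> k \<and> k - i + 1 \<le> j \<and> j \<le> n^2 - n}
       \<union> {(i, j, k) | i j. k + 1 \<le> i \<and> i \<le> n \<and> j \<le> n^2 - n}
     else if n \<le> k \<and> k \<le> n^2 - n - 2 then
       {(i, j, k) | i j. i \<le> n \<and> k - i + 1 \<le> j \<and> j \<le> n^2 - n}
     else if n^2 - n - 1 \<le> k \<and> k \<le> n^2 - 1 then
       {(i, j, k) | i j. k + n + 1 \<le> i + n^2 \<and> i \<le> n \<and> k - i + 1 \<le> j \<and> j \<le> n^2 - n}
     else {})"

definition T_all :: "nat \<Rightarrow> (nat \<times> nat \<times> nat) set" where
  "T_all n = (\<Union>k\<in>{1..n^2 - 1}. T_idx n k)"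

end

theory Submission
  imports Defs
begin

lemma key:
  fixes f A B g1 g2 :: "'a::field poly poly poly" and p :: "'a poly poly"
  assumes g2l: "lead_coeff g2 = 1" and g2d: "degree g2 = m"
    and g1: "g1 = [:p:]" and pd: "degree p = d" and p0: "p \<noteq> 0"
    and fd: "degree f < m" and fc: "\<forall>t. degree (coeff f t) < d"
    and eq: "f = A*g1 + B*g2"
  shows "f = 0"
proof -
  have g20: "g2 \<noteq> 0" using g2l by auto
  obtain Q R where QR: "pseudo_divmod A g2 = (Q,R)" by (cases "pseudo_divmod A g2") auto
  have A: "A = g2*Q + R" using pseudo_divmod(1)[OF g20 QR] g2l by simp
  have Rd: "R = 0 \<or> degree R < m" using pseudo_divmod(2)[OF g20 QR] g2d by simp
  define B' where "B' = B + Q*g1"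
  have e2: "f - R*g1 = B'*g2" unfolding B'_def using eq A by (simp add: algebra_simps)
  have dRg: "degree (R*g1) < m \<or> R*g1 = 0"
  proof (cases "R = 0")
    case False
    then have "degree R < m" using Rd by auto
    moreover have "degree (R*g1) \<le> degree R + degree g1" by (rule degree_mult_le)
    ultimately show ?thesis using g1 by auto
  qed simp
  have "degree (f - R*g1) < m"
    using dRg fd degree_diff_le_max[of f "R*g1"] by auto
  then have "B' = 0"
  proof -
    assume h: "degree (f - R*g1) < m"
    show "B' = 0"
    proof (rule ccontr)
      assume "B' \<noteq> 0"
      then have "degree (B'*g2) = degree B' + m" using g20 g2d by (simp add: degree_mult_eq)
      then show False using h e2 by simp
    qed
  qed
  then have fR: "f = smult p R" using e2 g1 by simp
  have "coeff f t = 0" for t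
  proof (rule ccontr)
    assume ne: "coeff f t \<noteq> 0"
    then have "coeff R t \<noteq> 0" using fR by simp
    then have "degree (p * coeff R t) = d + degree (coeff R t)" using p0 pd by (simp add: degree_mult_eq)
    then show False using fc[rule_format, of t] fR by simp
  qed
  then show ?thesis by (simp add: poly_eq_iff)
qed

lemma gkX_pow: "(gkX :: 'a::comm_ring_1 poly poly poly) ^ k = [:[:monom 1 k:]:]"
  unfolding gkX_def by (induction k) (auto simp: monom_Suc pCons_one)

lemma gkY_pow: "(gkY :: 'a::comm_ring_1 poly poly poly) ^ k = [:monom 1 k:]"
  unfolding gkY_def by (induction k) (auto simp: monom_Suc pCons_one)

lemma gkZ_pow: "(gkZ :: 'a::comm_ring_1 poly poly poly) ^ k = monom 1 k"
  unfolding gkZ_def by (induction k) (auto simp: monom_Suc)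

lemma mono3: "(gkX :: 'a::comm_ring_1 poly poly poly) ^ k * gkY ^ i * gkZ ^ j = monom (monom (monom 1 k) i) j"
  by (simp add: gkX_pow gkY_pow gkZ_pow smult_monom mult_monom)

lemma deg0_const: "degree (q :: 'b::zero poly) = 0 \<Longrightarrow> q = [:coeff q 0:]"
  by (metis degree_0_id)

lemma neg1_pow_deg: "degree ((-1::'a::comm_ring_1 poly poly poly) ^ a) = 0"
proof (induction a)
  case (Suc a)
  then show ?case using degree_mult_le[of "-1::'a poly poly poly" "(-1)^a"] by simp
qed simp

lemma gk_h_deg: "degree (gk_h n :: 'a::comm_ring_1 poly poly poly) = 0"
proof -
  have "degree ((-1) ^ (i + 1) * gkX ^ (i * (n - 1)) :: 'a poly poly poly) \<le> 0" for i
    using degree_mult_le[of "(-1::'a poly poly poly) ^ (i + 1)" "gkX ^ (i * (n - 1))"]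
    by (simp add: gkX_pow neg1_pow_deg)
  then have "degree (gk_h n :: 'a::comm_ring_1 poly poly poly) \<le> 0" unfolding gk_h_def
    by (intro degree_sum_le) auto
  then show ?thesis by simp
qed

lemma g2_props:
  assumes "m > 0"
  shows "lead_coeff ((gkZ ^ m - gkY * gk_h n) :: 'a::field poly poly poly) = 1"
    and "degree ((gkZ ^ m - gkY * gk_h n) :: 'a::field poly poly poly) = m"
proof -
  have d0: "degree ((gkY * gk_h n) :: 'a poly poly poly) = 0"
    using gk_h_deg[where 'a='a, of n] degree_mult_le[of "gkY::'a poly poly poly" "gk_h n"]
    by (simp add: gkY_def)
  then obtain c where c: "(gkY * gk_h n :: 'a poly poly poly) = [:c:]" by (metis deg0_const)
  have e: "(gkZ ^ m - gkY * gk_h n :: 'a poly poly poly) = monom 1 m - [:c:]" using c by (simp add: gkZ_pow)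
  have cm: "coeff (monom 1 m - [:c:]) m = 1" using assms by (simp add: coeff_pCons split: nat.splits)
  have dm: "degree (monom 1 m - [:c:]) \<le> m"
    using degree_diff_le_max[of "monom 1 m" "[:c:]"] by (simp add: degree_monom_eq)
  have "degree (monom 1 m - [:c:]) = m" using cm dm by (metis le_degree one_neq_zero le_antisym)
  then show "degree (gkZ ^ m - gkY * gk_h n :: 'a poly poly poly) = m" using e by simp
  then show "lead_coeff (gkZ ^ m - gkY * gk_h n :: 'a poly poly poly) = 1" using e cm by simp
qed

lemma g1_form:
  "(gkY ^ (n + 1) - gkX ^ n - gkX :: 'a::field poly poly poly) = [: monom 1 (n+1) - [:monom 1 n + monom 1 1:] :]"
proof -
  have "(gkY ^ (n + 1) - gkX ^ n - gkX :: 'a::field poly poly poly) = [:monom 1 (n+1):] - [:[:monom 1 n:]:] - [:[:monom 1 1:]:]"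
    using gkX_pow[of n, where 'a='a] gkX_pow[of 1, where 'a='a] gkY_pow[of "n+1", where 'a='a] by simp
  also have "\<dots> = [: monom 1 (n+1) - [:monom 1 n + monom 1 1:] :]" by (simp add: diff_pCons)
  finally show ?thesis .
qed

lemma p_deg: "degree (monom 1 (n+1) - [:monom 1 n + monom 1 1:] :: 'a::field poly poly) = n+1"
proof -
  have cm: "coeff (monom 1 (n+1) - [:monom 1 n + monom 1 1:] :: 'a poly poly) (n+1) = 1" by simp
  have dm: "degree (monom 1 (n+1) - [:monom 1 n + monom 1 1:] :: 'a poly poly) \<le> n+1"
    using degree_diff_le_max[of "monom 1 (n+1) :: 'a poly poly" "[:monom 1 n + monom 1 1:]"] by (simp add: degree_monom_eq)
  show ?thesis using cm dm by (metis le_degree one_neq_zero le_antisym)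
qed

lemma distinct_mon:
  fixes F :: "'a::field itself"
  assumes "i \<le> n" "i' \<le> n" "j < n^2 - n + 1" "j' < n^2 - n + 1"
    and "gk_fun_eq n F (i,j,k) (i',j',k')"
  shows "(i,j,k) = (i',j',k')"
proof -
  define f :: "'a poly poly poly" where "f = monom (monom (monom 1 k') i) j - monom (monom (monom 1 k) i') j'"
  obtain A B where eq: "f = A * (gkY ^ (n + 1) - gkX ^ n - gkX) + B * (gkZ ^ (n^2 - n + 1) - gkY * gk_h n)"
    using assms(5) unfolding gk_fun_eq_def gk_ideal_def f_def mono3 by auto
  have fd: "degree f < n^2 - n + 1"
    unfolding f_def using assms(3,4) degree_diff_le_max[of "monom (monom (monom (1::'a) k') i) j" "monom (monom (monom 1 k) i') j'"]
    by (simp add: degree_monom_eq)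
  have fc: "\<forall>t. degree (coeff f t) < n + 1"
  proof
    fix t
    show "degree (coeff f t) < n + 1"
      unfolding f_def using assms(1,2)
        degree_diff_le_max[of "if j = t then monom (monom (1::'a) k') i else 0" "if j' = t then monom (monom 1 k) i' else 0"]
      by (auto simp: coeff_monom degree_monom_eq split: if_splits)
  qed
  have p0: "(monom 1 (n+1) - [:monom 1 n + monom 1 1:] :: 'a poly poly) \<noteq> 0"
    using p_deg[of n, where 'a='a] by (metis degree_0 add_is_0 one_neq_zero)
  have m0: "0 < n^2 - n + 1" by simp
  have "f = 0"
    by (rule key[OF g2_props(1)[OF m0] g2_props(2)[OF m0] g1_form p_deg p0 fd fc eq])
  then have e: "monom (monom (monom (1::'a) k') i) j = monom (monom (monom 1 k) i') j'" unfolding f_def by simp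
  then have "j = j'" by (metis coeff_monom monom_eq_0_iff one_neq_zero)
  with e have "monom (monom (1::'a) k') i = monom (monom 1 k) i'" by (simp add: monom_eq_iff)
  then have "i = i'" by (metis coeff_monom monom_eq_0_iff one_neq_zero)
  with e `j = j'` have "k = k'" by (simp add: monom_eq_iff) (metis coeff_monom one_neq_zero)
  then show ?thesis using `i = i'` `j = j'` by simp
qed

lemma T_all_eq:
  assumes n3: "n \<ge> 3"
  shows "T_all n = {(i,j,k). 1 \<le> k \<and> i \<le> n \<and> j \<le> n^2-n \<and> k < i+j}"
proof -
  define N where "N = n^2 - n"
  have nn: "n^2 \<ge> 3*n" using n3 by (simp add: power2_eq_square)
  have sq: "n^2 = N + n" using nn unfolding N_def by simp
  have NL: "N \<ge> n + 3" using nn n3 unfolding N_def by simp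
  have e: "T_all n = (\<Union>k\<in>{1..N+n - 1}.
    (if 1 \<le> k \<and> k \<le> n - 1 then
       {(i, j, k) | i j. i \<le> k \<and> k - i + 1 \<le> j \<and> j \<le> N}
       \<union> {(i, j, k) | i j. k + 1 \<le> i \<and> i \<le> n \<and> j \<le> N}
     else if n \<le> k \<and> k \<le> N - 2 then
       {(i, j, k) | i j. i \<le> n \<and> k - i + 1 \<le> j \<and> j \<le> N}
     else if N - 1 \<le> k \<and> k \<le> N + n - 1 then
       {(i, j, k) | i j. k + n + 1 \<le> i + (N + n) \<and> i \<le> n \<and> k - i + 1 \<le> j \<and> j \<le> N}
     else {}))"
    unfolding T_all_def T_idx_def N_def[symmetric] sq by simp
  show ?thesis unfolding e N_def[symmetric]
  proof (rule set_eqI, clarify)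
    fix i j k
    show "((i, j, k) \<in> (\<Union>k\<in>{1..N+n - 1}.
    (if 1 \<le> k \<and> k \<le> n - 1 then
       {(i, j, k) | i j. i \<le> k \<and> k - i + 1 \<le> j \<and> j \<le> N}
       \<union> {(i, j, k) | i j. k + 1 \<le> i \<and> i \<le> n \<and> j \<le> N}
     else if n \<le> k \<and> k \<le> N - 2 then
       {(i, j, k) | i j. i \<le> n \<and> k - i + 1 \<le> j \<and> j \<le> N}
     else if N - 1 \<le> k \<and> k \<le> N + n - 1 then
       {(i, j, k) | i j. k + n + 1 \<le> i + (N + n) \<and> i \<le> n \<and> k - i + 1 \<le> j \<and> j \<le> N}
     else {}))) = ((i, j, k) \<in> {(i,j,k). 1 \<le> k \<and> i \<le> n \<and> j \<le> N \<and> k < i+j})"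
      using NL n3 by (auto split: if_splits)
  qed
qed

lemma card_T:
  "card {(i,j,k). 1 \<le> k \<and> i \<le> n \<and> j \<le> N \<and> k < i+j} = (\<Sum>i\<le>n. \<Sum>j\<le>N. i + j - 1)"
proof -
  have "{(i,j,k). 1 \<le> k \<and> i \<le> n \<and> j \<le> N \<and> k < i+j} = (SIGMA i:{..n}. SIGMA j:{..N}. {1..<i+j})"
    by auto
  then show ?thesis by (simp add: card_SigmaI)
qed

lemma sum_inner: "2 * (\<Sum>j\<le>(b::nat). (i::nat) + j - 1) + 2*(b+1) = (b+1)*(2*i+b) + (if i = 0 then 2 else 0)"
proof (induction b)
  case 0
  then show ?case by auto
next
  case (Suc b)
  have "(\<Sum>j\<le>Suc b. i + j - 1) = (\<Sum>j\<le>b. i + j - 1) + (i + b)" by simp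
  then have "2 * (\<Sum>j\<le>Suc b. i + j - 1) + 2*(Suc b+1) = (2 * (\<Sum>j\<le>b. i + j - 1) + 2*(b+1)) + (2*i + 2*b + 2)"
    by simp
  also have "\<dots> = (b+1)*(2*i+b) + (if i = 0 then 2 else 0) + (2*i + 2*b + 2)" using Suc by simp
  also have "\<dots> = (Suc b+1)*(2*i+Suc b) + (if i = 0 then 2 else 0)" by (simp add: algebra_simps)
  finally show ?case .
qed

lemma sum_double: "2 * (\<Sum>i\<le>(a::nat). \<Sum>j\<le>(b::nat). i + j - 1) + 2*(a+1)*(b+1) = (a+1)*(b+1)*(a+b) + 2"
proof (induction a)
  case 0
  have h: "2 * (\<Sum>j\<le>b. 0 + j - 1) + 2*(b+1) = (b+1)*(2*0+b) + (if (0::nat) = 0 then 2 else 0)"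
    by (rule sum_inner)
  have "(\<Sum>i\<le>(0::nat). \<Sum>j\<le>b. i + j - 1) = (\<Sum>j\<le>b. 0 + j - 1)" by simp
  then show ?case using h by (simp only: mult_1 mult_1_right add_0 mult_0_right if_True) (simp add: algebra_simps)
next
  case (Suc a)
  have h1: "2*(\<Sum>j\<le>b. Suc a + j - 1) + 2*(b+1) = (b+1)*(2*Suc a+b) + 0"
    using sum_inner[of "Suc a" b] by (simp only: nat.distinct if_False)
  have "2 * (\<Sum>i\<le>Suc a. \<Sum>j\<le>b. i + j - 1) + 2*(Suc a+1)*(b+1)
     = (2 * (\<Sum>i\<le>a. \<Sum>j\<le>b. i + j - 1) + 2*(a+1)*(b+1)) + (2 * (\<Sum>j\<le>b. Suc a + j - 1) + 2*(b+1))"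
    by (simp add: algebra_simps)
  also have "\<dots> = (a+1)*(b+1)*(a+b) + 2 + (b+1)*(2*Suc a+b)"
    by (simp only: Suc.IH h1)
  finally show ?case by (simp add: algebra_simps)
qed

lemma count:
  assumes "n \<ge> 3"
  shows "2 * card (T_all n) = n^5 - 2 * n^3 + n^2"
proof -
  define N where "N = n^2 - n"
  have nn: "n^2 \<ge> n" by (simp add: power2_eq_square)
  have sq: "n^2 = N + n" using nn unfolding N_def by simp
  have c: "2 * card (T_all n) + 2*(n+1)*(N+1) = (n+1)*(N+1)*(n+N) + 2"
    unfolding T_all_eq[OF assms] N_def[symmetric] card_T using sum_double .
  have "int (2 * card (T_all n)) = int ((n+1)*(N+1)*(n+N) + 2) - int (2*(n+1)*(N+1))"
    using c by linarith
  also have "\<dots> = int n^5 - 2 * int n^3 + int n^2"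
  proof -
    have "int N = int n^2 - int n" using sq by (metis add_diff_cancel_right' of_nat_add of_nat_power)
    then have NN: "int N = int n^2 - int n" .
    have "int ((n+1)*(N+1)*(n+N) + 2) - int (2*(n+1)*(N+1))
       = (int n+1)*(int N+1)*(int n+int N) + 2 - 2*(int n+1)*(int N+1)" by simp algebra
    also have "\<dots> = (int n+1)*((int n^2 - int n)+1)*(int n+(int n^2 - int n)) + 2 - 2*(int n+1)*((int n^2 - int n)+1)"
      by (simp only: NN)
    also have "\<dots> = int n^5 - 2 * int n^3 + int n^2" by algebra
    finally show ?thesis .
  qed
  finally have h: "int (2 * card (T_all n)) = int n^5 - 2 * int n^3 + int n^2" .
  have "2 * n^3 \<le> n^5"
  proof -
    have "(3::nat)^2 \<le> n^2" using assms by (rule power_mono) simp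
    then have "2 \<le> n^2" by simp
    then have "2 * n^3 \<le> n^2 * n^3" by (rule mult_right_mono) simp
    then show ?thesis by (simp add: power_add[symmetric])
  qed
  then have "int (n^5 - 2 * n^3 + n^2) = int n^5 - 2 * int n^3 + int n^2" by (simp add: of_nat_diff)
  then have "int (2 * card (T_all n)) = int (n^5 - 2 * n^3 + n^2)" using h by simp
  then show ?thesis by (simp only: of_nat_eq_iff)
qed

theorem mainTheorem1:
  fixes n :: nat and F :: "'a::{field, finite} itself"
  assumes "n \<ge> 3"
    and "\<exists>p e. prime p \<and> e > 0 \<and> n = p ^ e"
    and "card (UNIV :: 'a set) = n ^ 6"
  shows "(\<forall>a\<in>T_all n. \<forall>b\<in>T_all n. a \<noteq> b \<longrightarrow> \<not> gk_fun_eq n F a b)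
       \<and> 2 * card (T_all n) = n^5 - 2 * n^3 + n^2"
proof
  show "\<forall>a\<in>T_all n. \<forall>b\<in>T_all n. a \<noteq> b \<longrightarrow> \<not> gk_fun_eq n F a b"
  proof (intro ballI impI)
    fix a b assume a: "a \<in> T_all n" and b: "b \<in> T_all n" and ne: "a \<noteq> b"
    obtain i j k where ai: "a = (i,j,k)" by (cases a) auto
    obtain i' j' k' where bi: "b = (i',j',k')" by (cases b) auto
    have "i \<le> n" "j < n^2 - n + 1" using a ai unfolding T_all_eq[OF assms(1)] by auto
    moreover have "i' \<le> n" "j' < n^2 - n + 1" using b bi unfolding T_all_eq[OF assms(1)] by auto
    ultimately show "\<not> gk_fun_eq n F a b"
      using distinct_mon[of i n i' j j' F k k'] ne ai bi by auto
  qed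
  show "2 * card (T_all n) = n^5 - 2 * n^3 + n^2" by (rule count[OF assms(1)])
qed

end
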